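(* For any two strongly connected weighted directed graphs $G_R,G_M$ on the same vertex set $V$ and any $r>0$, $$f_{G_R,G_M}(r)\le 1-f_{G_M,G_R}\!\left(\tfrac1r\right),$$ where $f_{A,B}(s)$ denotes the fixation probability of the two-graph Moran process with resident graph $A$, mutant graph $B$, and mutant relative fitness $s$.
   Context: Two-graph Moran process: vertex set $V=\{1,\dots,n\}$; resident graph $G_R=(V,E_R)$ and mutant graph $G_M=(V,E_M)$, strongly connected, with row-stochastic weight matrices $W_R=[w^R_{ij}]$, $W_M=[w^M_{ij}]$ ($w^R_{ij}>0$ iff $(i,j)\in E_R$, similarly for $M$). The state is the mutant set $S$; residents have fitness $1$, mutants fitness $r>0$. Each step a vertex $i$ is chosen with probability proportional to fitness; if $i$ is a mutant, it picks $j$ with probability $w^M_{ij}$ and $j$ becomes a mutant; if a resident, it picks $j$ with probability $w^R_{ij}$ and $j$ becomes a resident. Absorption at $S=\emptyset$ (extinction) or $S=V$ (fixation). The fixation probability $f_{G_R,G_M}(r)=\frac1n\sum_{u\in V}f(\{u\})$, where $f(S)$ is the probability of fixation starting from mutant set $S$. *)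

theory Defs
  imports Complex_Main
begin

text \<open>Vertices are the elements of a finite type 'v (so V = UNIV, n = CARD('v)).
  A weight matrix is a function 'v => 'v => real.\<close>

definition row_stochastic :: "('v::finite \<Rightarrow> 'v \<Rightarrow> real) \<Rightarrow> bool" where
  "row_stochastic W \<longleftrightarrow> (\<forall>i j. 0 \<le> W i j) \<and> (\<forall>i. (\<Sum>j\<in>UNIV. W i j) = 1)"

definition edges :: "('v \<Rightarrow> 'v \<Rightarrow> real) \<Rightarrow> ('v \<times> 'v) set" where
  "edges W = {(i, j). 0 < W i j}"

definition strongly_connected :: "('v \<Rightarrow> 'v \<Rightarrow> real) \<Rightarrow> bool" where
  "strongly_connected W \<longleftrightarrow> (\<forall>i j. (i, j) \<in> (edges W)\<^sup>*)"

text \<open>Fitness of vertex i in state S (S = set of mutants).\<close>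
definition fitness :: "real \<Rightarrow> 'v set \<Rightarrow> 'v \<Rightarrow> real" where
  "fitness r S i = (if i \<in> S then r else 1)"

definition step :: "'v set \<Rightarrow> 'v \<Rightarrow> 'v \<Rightarrow> 'v set" where
  "step S i j = (if i \<in> S then insert j S else S - {j})"

definition trans :: "('v::finite \<Rightarrow> 'v \<Rightarrow> real) \<Rightarrow> ('v \<Rightarrow> 'v \<Rightarrow> real) \<Rightarrow> real
    \<Rightarrow> 'v set \<Rightarrow> 'v set \<Rightarrow> real" where
  "trans WR WM r S T =
     (\<Sum>i\<in>UNIV. \<Sum>j\<in>UNIV.
        (fitness r S i / (\<Sum>k\<in>UNIV. fitness r S k)) *
        (if i \<in> S then WM i j else WR i j) *
        (if step S i j = T then 1 else 0))"

text \<open>Probability that the process started in S is in state V (= UNIV) after k steps.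
  Since V is absorbing, this equals the probability of fixation by time k.\<close>
fun fix_by :: "('v::finite \<Rightarrow> 'v \<Rightarrow> real) \<Rightarrow> ('v \<Rightarrow> 'v \<Rightarrow> real) \<Rightarrow> real
    \<Rightarrow> nat \<Rightarrow> 'v set \<Rightarrow> real" where
  "fix_by WR WM r 0 S = (if S = UNIV then 1 else 0)"
| "fix_by WR WM r (Suc k) S = (\<Sum>T\<in>UNIV. trans WR WM r S T * fix_by WR WM r k T)"

definition fix_prob :: "('v::finite \<Rightarrow> 'v \<Rightarrow> real) \<Rightarrow> ('v \<Rightarrow> 'v \<Rightarrow> real) \<Rightarrow> real
    \<Rightarrow> 'v set \<Rightarrow> real" where
  "fix_prob WR WM r S = lim (\<lambda>k. fix_by WR WM r k S)"

definition fixation :: "('v::finite \<Rightarrow> 'v \<Rightarrow> real) \<Rightarrow> ('v \<Rightarrow> 'v \<Rightarrow> real) \<Rightarrow> real \<Rightarrow> real" where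
  "fixation WR WM r = (1 / real (card (UNIV :: 'v set))) * (\<Sum>u\<in>UNIV. fix_prob WR WM r {u})"

end

theory Submission
  imports Defs
begin

fun iter :: "('v::finite set \<Rightarrow> 'v set \<Rightarrow> real) \<Rightarrow> nat \<Rightarrow> 'v set \<Rightarrow> real" where
  "iter K 0 S = (if S = UNIV then 1 else 0)"
| "iter K (Suc k) S = (\<Sum>T\<in>UNIV. K S T * iter K k T)"

definition kern :: "('v::finite set \<Rightarrow> 'v set \<Rightarrow> real) \<Rightarrow> bool" where
  "kern K \<longleftrightarrow> (\<forall>S T. 0 \<le> K S T) \<and> (\<forall>S. (\<Sum>T\<in>UNIV. K S T) = 1) \<and> K UNIV UNIV = 1"

lemma kern_op_mono:
  assumes "kern K" "\<And>T. f T \<le> g T"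
  shows "(\<Sum>T\<in>UNIV. K S T * f T) \<le> (\<Sum>T\<in>UNIV. K S T * g T)"
  using assms unfolding kern_def by (intro sum_mono mult_left_mono) auto

lemma kern_UNIV_other:
  assumes "kern K" "T \<noteq> UNIV" shows "K UNIV T = 0"
proof -
  have s: "(\<Sum>T\<in>UNIV. K UNIV T) = K UNIV UNIV + (\<Sum>T\<in>UNIV - {UNIV}. K UNIV T)"
    by (simp add: sum.remove)
  hence z: "(\<Sum>T\<in>UNIV - {UNIV}. K UNIV T) = 0" using assms unfolding kern_def by simp
  have nn: "\<forall>x\<in>UNIV - {UNIV}. 0 \<le> K UNIV x" using assms unfolding kern_def by blast
  have "\<forall>x\<in>UNIV - {UNIV}. K UNIV x = 0" using sum_nonneg_eq_0_iff[of "UNIV - {UNIV}" "K UNIV"] nn z by simp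
  thus ?thesis using assms(2) by blast
qed

lemma iter_bounds: assumes "kern K" shows "0 \<le> iter K k S \<and> iter K k S \<le> 1"
proof (induction k arbitrary: S)
  case 0 show ?case by simp
next
  case (Suc k)
  have "0 \<le> (\<Sum>T\<in>UNIV. K S T * iter K k T)"
    using assms Suc unfolding kern_def by (intro sum_nonneg mult_nonneg_nonneg) auto
  moreover have "(\<Sum>T\<in>UNIV. K S T * iter K k T) \<le> (\<Sum>T\<in>UNIV. K S T * 1)"
    using kern_op_mono[OF assms, of "iter K k" "\<lambda>_. 1"] Suc by auto
  ultimately show ?case using assms unfolding kern_def by simp
qed

lemma iter_UNIV: assumes "kern K" shows "iter K k UNIV = 1"
proof (induction k)
  case 0 show ?case by simp
next
  case (Suc k)
  have "\<And>T. K UNIV T * iter K k T = (if T = UNIV then 1 else 0)"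
    using Suc assms kern_UNIV_other[OF assms] unfolding kern_def by auto
  thus ?case by simp
qed

lemma iter_inc: assumes "kern K" shows "iter K k S \<le> iter K (Suc k) S"
proof (induction k arbitrary: S)
  case 0
  show ?case
  proof (cases "S = UNIV")
    case True thus ?thesis using iter_UNIV[OF assms, of "Suc 0"] by simp
  next
    case False thus ?thesis using iter_bounds[OF assms, of "Suc 0" S] by simp
  qed
next
  case (Suc k)
  show ?case using kern_op_mono[OF assms, of "iter K k" "iter K (Suc k)"] Suc by simp
qed

definition L :: "('v::finite set \<Rightarrow> 'v set \<Rightarrow> real) \<Rightarrow> 'v set \<Rightarrow> real" where
  "L K S = lim (\<lambda>k. iter K k S)"

lemma iter_lim: assumes "kern K" shows "(\<lambda>k. iter K k S) \<longlonglongrightarrow> L K S"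
proof -
  have inc: "incseq (\<lambda>k. iter K k S)" using iter_inc[OF assms] by (rule incseq_SucI)
  have bd: "\<forall>i. iter K i S \<le> 1" using iter_bounds[OF assms] by blast
  from incseq_convergent[OF inc bd] obtain l where "(\<lambda>k. iter K k S) \<longlonglongrightarrow> l" by blast
  hence "convergent (\<lambda>k. iter K k S)" unfolding convergent_def by blast
  thus ?thesis unfolding L_def convergent_LIMSEQ_iff .
qed

lemma L_bounds: assumes "kern K" shows "0 \<le> L K S \<and> L K S \<le> 1"
proof
  have "\<exists>N. \<forall>n\<ge>N. 0 \<le> iter K n S" using iter_bounds[OF assms] by blast
  from LIMSEQ_le_const[OF iter_lim[OF assms] this] show "0 \<le> L K S" .
  have "\<exists>N. \<forall>n\<ge>N. iter K n S \<le> 1" using iter_bounds[OF assms] by blast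
  from LIMSEQ_le_const2[OF iter_lim[OF assms] this] show "L K S \<le> 1" .
qed

lemma L_UNIV: assumes "kern K" shows "L K UNIV = 1"
proof -
  have "(\<lambda>k. iter K k UNIV) \<longlonglongrightarrow> 1" using iter_UNIV[OF assms] by simp
  from LIMSEQ_unique[OF iter_lim[OF assms, of UNIV] this] show ?thesis .
qed

lemma L_harm: assumes "kern K" shows "(\<Sum>T\<in>UNIV. K S T * L K T) = L K S"
proof -
  have a: "(\<lambda>k. iter K (Suc k) S) \<longlonglongrightarrow> L K S"
    using iter_lim[OF assms] by (rule LIMSEQ_Suc)
  have b: "(\<lambda>k. iter K (Suc k) S) \<longlonglongrightarrow> (\<Sum>T\<in>UNIV. K S T * L K T)"
    unfolding iter.simps
    by (intro tendsto_sum tendsto_mult tendsto_const iter_lim[OF assms])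
  show ?thesis using LIMSEQ_unique[OF b a] .
qed

lemma L_le:
  assumes "kern K" "\<And>T. 0 \<le> \<phi> T" "1 \<le> \<phi> UNIV" "\<And>S. (\<Sum>T\<in>UNIV. K S T * \<phi> T) \<le> \<phi> S"
  shows "L K S \<le> \<phi> S"
proof -
  have "iter K k S \<le> \<phi> S" for k
  proof (induction k arbitrary: S)
    case 0 thus ?case using assms by auto
  next
    case (Suc k)
    thus ?case using kern_op_mono[OF assms(1), of "iter K k" \<phi> S] assms(4)[of S] by simp
  qed
  hence "\<exists>N. \<forall>n\<ge>N. iter K n S \<le> \<phi> S" by blast
  from LIMSEQ_le_const2[OF iter_lim[OF assms(1)] this] show ?thesis .
qed

lemma fix_by_iter: "fix_by WR WM r k S = iter (trans WR WM r) k S"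
  by (induction k arbitrary: S) auto

definition lam :: "real \<Rightarrow> 'v::finite set \<Rightarrow> real" where
  "lam r S = (\<Sum>k\<in>UNIV. fitness r S k)"

lemma fitness_pos: "r > 0 \<Longrightarrow> fitness r S i > 0"
  unfolding fitness_def by auto

lemma fitness_nonneg: "r > 0 \<Longrightarrow> 0 \<le> fitness r S i"
  unfolding fitness_def by auto

lemma lam_pos: "r > 0 \<Longrightarrow> lam r (S::'v::finite set) > 0"
  unfolding lam_def using fitness_pos by (intro sum_pos) auto

lemma trans_sum:
  "(\<Sum>T\<in>UNIV. trans WR WM r S T * \<phi> T) =
   (\<Sum>i\<in>UNIV. \<Sum>j\<in>UNIV. (fitness r S i / lam r S) *
      (if i \<in> S then WM i j else WR i j) * \<phi> (step S i j))"
proof -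
  have "(\<Sum>T\<in>UNIV. trans WR WM r S T * \<phi> T) =
    (\<Sum>T\<in>UNIV. \<Sum>i\<in>UNIV. \<Sum>j\<in>UNIV. (fitness r S i / lam r S) *
      (if i \<in> S then WM i j else WR i j) * (if step S i j = T then \<phi> T else 0))"
    unfolding trans_def lam_def sum_distrib_right by (intro sum.cong refl) auto
  also have "\<dots> = (\<Sum>i\<in>UNIV. \<Sum>T\<in>UNIV. \<Sum>j\<in>UNIV. (fitness r S i / lam r S) *
      (if i \<in> S then WM i j else WR i j) * (if step S i j = T then \<phi> T else 0))"
    by (rule sum.swap)
  also have "\<dots> = (\<Sum>i\<in>UNIV. \<Sum>j\<in>UNIV. \<Sum>T\<in>UNIV. (fitness r S i / lam r S) *
      (if i \<in> S then WM i j else WR i j) * (if step S i j = T then \<phi> T else 0))"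
    by (intro sum.cong refl) (rule sum.swap)
  also have "\<dots> = (\<Sum>i\<in>UNIV. \<Sum>j\<in>UNIV. (fitness r S i / lam r S) *
      (if i \<in> S then WM i j else WR i j) * \<phi> (step S i j))"
    by (intro sum.cong refl) (simp add: if_distrib[of "\<lambda>x. _ * x"] cong: if_cong)
  finally show ?thesis .
qed

lemma row_sum_w:
  assumes "row_stochastic WR" "row_stochastic WM"
  shows "(\<Sum>j\<in>UNIV. (if i \<in> S then WM i j else WR i j)) = 1"
  using assms unfolding row_stochastic_def by (cases "i \<in> S") auto

lemma trans_row:
  assumes "row_stochastic WR" "row_stochastic WM" "r > 0"
  shows "(\<Sum>T\<in>UNIV. trans WR WM r S T) = 1"
proof -
  have "(\<Sum>T\<in>UNIV. trans WR WM r S T) = (\<Sum>T\<in>UNIV. trans WR WM r S T * 1)" by simp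
  also have "\<dots> = (\<Sum>i\<in>UNIV. (fitness r S i / lam r S) *
      (\<Sum>j\<in>UNIV. (if i \<in> S then WM i j else WR i j)))"
    unfolding trans_sum by (simp add: sum_distrib_left)
  also have "\<dots> = (\<Sum>i\<in>UNIV. fitness r S i) / lam r S"
    using row_sum_w[OF assms(1,2)] by (simp add: sum_divide_distrib)
  also have "\<dots> = 1" using lam_pos[OF assms(3), of S] unfolding lam_def by simp
  finally show ?thesis .
qed

lemma trans_nonneg:
  assumes "row_stochastic WR" "row_stochastic WM" "r > 0"
  shows "0 \<le> trans WR WM r S T"
  unfolding trans_def using assms fitness_nonneg[OF assms(3)] lam_pos[OF assms(3), of S]
  unfolding row_stochastic_def lam_def
  by (intro sum_nonneg mult_nonneg_nonneg divide_nonneg_pos) (auto simp: less_imp_le)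

lemma step_UNIV: "step UNIV i j = UNIV"
  unfolding step_def by auto

lemma kern_trans:
  assumes "row_stochastic WR" "row_stochastic WM" "r > 0"
  shows "kern (trans WR WM r)"
proof -
  have "trans WR WM r UNIV UNIV = (\<Sum>T\<in>UNIV. trans WR WM r UNIV T * (if T = UNIV then 1 else 0))"
  proof -
    have "\<And>T. trans WR WM r UNIV T * (if T = UNIV then 1 else 0) =
      (if T = UNIV then trans WR WM r UNIV UNIV else 0)" by simp
    thus ?thesis by simp
  qed
  also have "\<dots> = (\<Sum>T\<in>UNIV. trans WR WM r UNIV T * 1)"
    unfolding trans_sum by (simp add: step_UNIV)
  also have "\<dots> = 1" using trans_row[OF assms] by simp
  finally show ?thesis using trans_row[OF assms] trans_nonneg[OF assms] unfolding kern_def by auto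
qed

definition MM :: "real \<Rightarrow> real" where "MM r = max 1 r"

definition cc :: "real \<Rightarrow> 'v::finite set \<Rightarrow> real" where
  "cc r S = lam r S / (real (card (UNIV::'v set)) * MM r)"

definition Qk :: "('v::finite \<Rightarrow> 'v \<Rightarrow> real) \<Rightarrow> ('v \<Rightarrow> 'v \<Rightarrow> real) \<Rightarrow> real
    \<Rightarrow> 'v set \<Rightarrow> 'v set \<Rightarrow> real" where
  "Qk WR WM r S T = cc r S * trans WR WM r S T + (if S = T then 1 - cc r S else 0)"

lemma MM_pos: "0 < MM r" unfolding MM_def by auto

lemma card_pos: "0 < card (UNIV::'v::finite set)"
  by (rule finite_UNIV_card_ge_0) simp

lemma NM_pos: "0 < real (card (UNIV::'v::finite set)) * MM r"
  using card_pos[where 'v='v] MM_pos[of r] by simp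

lemma lam_le: "lam r (S::'v::finite set) \<le> real (card (UNIV::'v set)) * MM r"
proof -
  have "\<And>i. i \<in> UNIV \<Longrightarrow> fitness r S i \<le> MM r" unfolding fitness_def MM_def by auto
  from sum_bounded_above[OF this] show ?thesis unfolding lam_def by simp
qed

lemma cc_bounds: "r > 0 \<Longrightarrow> 0 < cc r (S::'v::finite set) \<and> cc r S \<le> 1"
  unfolding cc_def using lam_pos[of r S] lam_le[of r S] NM_pos[where 'v='v, of r]
  by (auto simp: divide_le_eq_1)

lemma Q_apply:
  "(\<Sum>T\<in>UNIV. Qk WR WM r S T * \<phi> T) =
     cc r S * (\<Sum>T\<in>UNIV. trans WR WM r S T * \<phi> T) + (1 - cc r S) * \<phi> S"
proof -
  have "(\<Sum>T\<in>UNIV. Qk WR WM r S T * \<phi> T) =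
     (\<Sum>T\<in>UNIV. cc r S * (trans WR WM r S T * \<phi> T) + (if S = T then (1 - cc r S) * \<phi> T else 0))"
    unfolding Qk_def by (intro sum.cong refl) (auto simp: algebra_simps)
  also have "\<dots> = cc r S * (\<Sum>T\<in>UNIV. trans WR WM r S T * \<phi> T) + (1 - cc r S) * \<phi> S"
    by (simp add: sum.distrib sum_distrib_left)
  finally show ?thesis .
qed

lemma kern_Q:
  assumes "row_stochastic WR" "row_stochastic WM" "r > 0"
  shows "kern (Qk WR WM r)"
proof -
  have k: "kern (trans WR WM r)" by (rule kern_trans[OF assms])
  have nn: "0 \<le> Qk WR WM r S T" for S T
    unfolding Qk_def using cc_bounds[OF assms(3), of S] trans_nonneg[OF assms, of S T] by auto
  have rs: "(\<Sum>T\<in>UNIV. Qk WR WM r S T) = 1" for S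
    using Q_apply[of WR WM r S "\<lambda>_. 1"] trans_row[OF assms, of S] by simp
  have "Qk WR WM r UNIV UNIV = 1" unfolding Qk_def using k unfolding kern_def by simp
  thus ?thesis using nn rs unfolding kern_def by blast
qed

definition tt :: "('v \<Rightarrow> 'v \<Rightarrow> real) \<Rightarrow> ('v \<Rightarrow> 'v \<Rightarrow> real) \<Rightarrow> real \<Rightarrow> ('v::finite set \<Rightarrow> real)
    \<Rightarrow> 'v set \<Rightarrow> 'v \<Rightarrow> real" where
  "tt WR WM r \<phi> S i = fitness r S i * (\<Sum>j\<in>UNIV. (if i \<in> S then WM i j else WR i j) * \<phi> (step S i j))
     + (MM r - fitness r S i) * \<phi> S"

lemma Q_scaled:
  assumes "r > 0"
  shows "real (card (UNIV::'v set)) * MM r * (\<Sum>T\<in>UNIV. Qk WR WM r S T * \<phi> T) = (\<Sum>i\<in>UNIV. tt WR WM r \<phi> (S::'v::finite set) i)"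
proof -
  have lp: "lam r S > 0" using lam_pos[OF assms] .
  have c: "real (card (UNIV::'v set)) * MM r * cc r S = lam r S" unfolding cc_def using card_pos[where 'v='v] MM_pos[of r] by simp
  have a: "lam r S * (\<Sum>T\<in>UNIV. trans WR WM r S T * \<phi> T) =
     (\<Sum>i\<in>UNIV. fitness r S i * (\<Sum>j\<in>UNIV. (if i \<in> S then WM i j else WR i j) * \<phi> (step S i j)))"
    unfolding trans_sum sum_distrib_left using lp by (intro sum.cong refl) (simp add: field_simps)
  have b: "real (card (UNIV::'v set)) * MM r - lam r S = (\<Sum>i\<in>UNIV. MM r - fitness r S i)"
    unfolding lam_def by (simp add: sum_subtractf)
  have "real (card (UNIV::'v set)) * MM r * (\<Sum>T\<in>UNIV. Qk WR WM r S T * \<phi> T) =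
     lam r S * (\<Sum>T\<in>UNIV. trans WR WM r S T * \<phi> T) + (real (card (UNIV::'v set)) * MM r - lam r S) * \<phi> S"
    unfolding Q_apply using c by (simp add: algebra_simps)
  also have "\<dots> = (\<Sum>i\<in>UNIV. tt WR WM r \<phi> S i)"
    unfolding a b tt_def by (simp add: sum.distrib sum_distrib_right)
  finally show ?thesis .
qed

lemma tt_mono:
  assumes "row_stochastic WR" "row_stochastic WM" "r > 0" "S \<subseteq> S'"
    and mono: "\<And>A B. A \<subseteq> B \<Longrightarrow> \<phi> A \<le> \<phi> B"
  shows "tt WR WM r \<phi> S i \<le> tt WR WM r \<phi> S' i"
proof -
  have WR0: "\<And>j. 0 \<le> WR i j" and WR1: "(\<Sum>j\<in>UNIV. WR i j) = 1"
   and WM0: "\<And>j. 0 \<le> WM i j" and WM1: "(\<Sum>j\<in>UNIV. WM i j) = 1"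
    using assms(1,2) unfolding row_stochastic_def by auto
  have M1: "1 \<le> MM r" and Mr: "r \<le> MM r" unfolding MM_def by auto
  have phiS: "\<phi> S \<le> \<phi> S'" using mono assms(4) by blast
  consider "i \<in> S" | "i \<notin> S'" | "i \<in> S' - S" using assms(4) by blast
  thus ?thesis
  proof cases
    case 1
    hence i': "i \<in> S'" using assms(4) by blast
    have "(\<Sum>j\<in>UNIV. WM i j * \<phi> (insert j S)) \<le> (\<Sum>j\<in>UNIV. WM i j * \<phi> (insert j S'))"
      using WM0 mono[OF insert_mono[OF assms(4)]] by (intro sum_mono mult_left_mono) auto
    hence "r * (\<Sum>j\<in>UNIV. WM i j * \<phi> (insert j S)) + (MM r - r) * \<phi> S
        \<le> r * (\<Sum>j\<in>UNIV. WM i j * \<phi> (insert j S')) + (MM r - r) * \<phi> S'"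
      using assms(3) Mr phiS by (intro add_mono mult_left_mono) auto
    thus ?thesis using 1 i' unfolding tt_def fitness_def step_def by simp
  next
    case 2
    hence i': "i \<notin> S" using assms(4) by blast
    have "(\<Sum>j\<in>UNIV. WR i j * \<phi> (S - {j})) \<le> (\<Sum>j\<in>UNIV. WR i j * \<phi> (S' - {j}))"
      using WR0 mono[OF Diff_mono[OF assms(4) subset_refl]] by (intro sum_mono mult_left_mono) auto
    hence "1 * (\<Sum>j\<in>UNIV. WR i j * \<phi> (S - {j})) + (MM r - 1) * \<phi> S
        \<le> 1 * (\<Sum>j\<in>UNIV. WR i j * \<phi> (S' - {j})) + (MM r - 1) * \<phi> S'"
      using M1 phiS by (intro add_mono mult_left_mono) auto
    thus ?thesis using 2 i' unfolding tt_def fitness_def step_def by simp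
  next
    case 3
    have "(\<Sum>j\<in>UNIV. WR i j * \<phi> (S - {j})) \<le> (\<Sum>j\<in>UNIV. WR i j * \<phi> S)"
      using WR0 mono[OF Diff_subset] by (intro sum_mono mult_left_mono) auto
    also have "\<dots> = \<phi> S" using WR1 by (simp add: sum_distrib_right[symmetric])
    finally have x: "(\<Sum>j\<in>UNIV. WR i j * \<phi> (S - {j})) \<le> \<phi> S" .
    have "\<phi> S' = (\<Sum>j\<in>UNIV. WM i j * \<phi> S')" using WM1 by (simp add: sum_distrib_right[symmetric])
    also have "\<dots> \<le> (\<Sum>j\<in>UNIV. WM i j * \<phi> (insert j S'))"
      using WM0 mono[OF subset_insertI] by (intro sum_mono mult_left_mono) auto
    finally have y: "\<phi> S' \<le> (\<Sum>j\<in>UNIV. WM i j * \<phi> (insert j S'))" .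
    have "1 * (\<Sum>j\<in>UNIV. WR i j * \<phi> (S - {j})) + (MM r - 1) * \<phi> S \<le> MM r * \<phi> S"
      using x by (simp add: algebra_simps)
    also have "\<dots> \<le> MM r * \<phi> S'" using phiS M1 by (intro mult_left_mono) auto
    also have "\<dots> = r * \<phi> S' + (MM r - r) * \<phi> S'" by (simp add: algebra_simps)
    also have "\<dots> \<le> r * (\<Sum>j\<in>UNIV. WM i j * \<phi> (insert j S')) + (MM r - r) * \<phi> S'"
      using y assms(3) Mr by (intro add_mono mult_left_mono) auto
    finally show ?thesis using 3 unfolding tt_def fitness_def step_def by simp
  qed
qed

lemma Q_mono:
  fixes S :: "'v::finite set"
  assumes "row_stochastic WR" "row_stochastic WM" "r > 0" "S \<subseteq> S'"
    and mono: "\<And>A B. A \<subseteq> B \<Longrightarrow> \<phi> A \<le> \<phi> B"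
  shows "(\<Sum>T\<in>UNIV. Qk WR WM r S T * \<phi> T) \<le> (\<Sum>T\<in>UNIV. Qk WR WM r S' T * \<phi> T)"
proof -
  have "real (card (UNIV::'v set)) * MM r * (\<Sum>T\<in>UNIV. Qk WR WM r S T * \<phi> T)
     \<le> real (card (UNIV::'v set)) * MM r * (\<Sum>T\<in>UNIV. Qk WR WM r S' T * \<phi> T)"
    unfolding Q_scaled[OF assms(3)] using tt_mono[OF assms] by (intro sum_mono) auto
  from mult_left_le_imp_le[OF this NM_pos[where 'v='v, of r]] show ?thesis .
qed

lemma fix_prob_L: "fix_prob WR WM r S = L (trans WR WM r) S"
  unfolding fix_prob_def L_def fix_by_iter ..

lemma iterQ_mono:
  assumes "row_stochastic WR" "row_stochastic WM" "r > 0"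
  shows "A \<subseteq> B \<Longrightarrow> iter (Qk WR WM r) k A \<le> iter (Qk WR WM r) k (B::'v::finite set)"
proof (induction k arbitrary: A B)
  case 0 thus ?case by auto
next
  case (Suc k)
  show ?case using Q_mono[OF assms Suc.prems, of "iter (Qk WR WM r) k"] Suc.IH by simp
qed

lemma LQ_mono:
  assumes "row_stochastic WR" "row_stochastic WM" "r > 0" "A \<subseteq> B"
  shows "L (Qk WR WM r) A \<le> L (Qk WR WM r) (B::'v::finite set)"
proof -
  have "\<exists>N. \<forall>n\<ge>N. iter (Qk WR WM r) n A \<le> iter (Qk WR WM r) n B"
    using iterQ_mono[OF assms(1-3) assms(4)] by blast
  from LIMSEQ_le[OF iter_lim[OF kern_Q[OF assms(1-3)]] iter_lim[OF kern_Q[OF assms(1-3)]] this]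
  show ?thesis .
qed

lemma fix_prob_mono:
  assumes "row_stochastic WR" "row_stochastic WM" "r > 0" "A \<subseteq> B"
  shows "fix_prob WR WM r A \<le> fix_prob WR WM r (B::'v::finite set)"
proof -
  let ?P = "trans WR WM r" and ?Q = "Qk WR WM r"
  have kP: "kern ?P" by (rule kern_trans[OF assms(1-3)])
  have kQ: "kern ?Q" by (rule kern_Q[OF assms(1-3)])
  have hP: "\<And>S. (\<Sum>T\<in>UNIV. ?P S T * L ?P T) = L ?P S" using L_harm[OF kP] .
  have hQ: "\<And>S. (\<Sum>T\<in>UNIV. ?Q S T * L ?P T) = L ?P S"
    unfolding Q_apply hP by (simp add: algebra_simps)
  have GQ: "\<And>S. L ?Q S \<le> L ?P S"
    by (rule L_le[OF kQ]) (auto simp add: L_bounds[OF kP] L_UNIV[OF kP] hQ)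
  have gP: "(\<Sum>T\<in>UNIV. ?P S T * L ?Q T) = L ?Q S" for S
  proof -
    have "cc r S * (\<Sum>T\<in>UNIV. ?P S T * L ?Q T) + (1 - cc r S) * L ?Q S = L ?Q S"
      using L_harm[OF kQ, of S] unfolding Q_apply .
    hence "cc r S * ((\<Sum>T\<in>UNIV. ?P S T * L ?Q T) - L ?Q S) = 0" by (simp add: algebra_simps)
    thus ?thesis using cc_bounds[OF assms(3), of S] by simp
  qed
  have PG: "\<And>S. L ?P S \<le> L ?Q S"
    by (rule L_le[OF kP]) (auto simp add: L_bounds[OF kQ] L_UNIV[OF kQ] gP)
  have "L ?P A \<le> L ?Q A" by (rule PG)
  also have "\<dots> \<le> L ?Q B" by (rule LQ_mono[OF assms])
  also have "\<dots> \<le> L ?P B" by (rule GQ)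
  finally show ?thesis unfolding fix_prob_L .
qed

lemma fitness_compl: "r > 0 \<Longrightarrow> fitness (1/r) (- A) i = fitness r A i / r"
  unfolding fitness_def by auto

lemma step_compl: "step (- A) i j = - step A i j"
  unfolding step_def by auto

lemma trans_compl:
  assumes "r > 0"
  shows "trans WM WR (1/r) (- A) (- B) = trans WR WM r (A::'v::finite set) B"
proof -
  have l: "(\<Sum>k\<in>UNIV. fitness (1/r) (- A) k) = (\<Sum>k\<in>UNIV. fitness r A k) / r"
    unfolding fitness_compl[OF assms] by (simp add: sum_divide_distrib)
  have q: "\<And>i. fitness (1/r) (- A) i / (\<Sum>k\<in>UNIV. fitness (1/r) (- A) k)
      = fitness r A i / (\<Sum>k\<in>UNIV. fitness r A k)"
    unfolding l fitness_compl[OF assms] using assms by (simp add: sum_divide_distrib[symmetric])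
  show ?thesis unfolding trans_def step_compl q by (intro sum.cong refl) auto
qed

lemma sum_compl: "(\<Sum>T\<in>(UNIV::'v::finite set set). g T) = (\<Sum>B\<in>UNIV. g (- B))"
  by (rule sum.reindex_bij_witness[of _ uminus uminus]) auto

lemma fix_ext_iter:
  assumes "row_stochastic WR" "row_stochastic WM" "r > 0"
  shows "iter (trans WR WM r) k A + iter (trans WM WR (1/r)) k (- A) \<le> 1"
proof (induction k arbitrary: A)
  case 0 show ?case by auto
next
  case (Suc k)
  let ?P = "trans WR WM r" and ?P' = "trans WM WR (1/r)"
  have e: "iter ?P' (Suc k) (- A) = (\<Sum>B\<in>UNIV. ?P A B * iter ?P' k (- B))"
    by (simp only: iter.simps) (subst sum_compl, simp add: trans_compl[OF assms(3)])
  have "iter ?P (Suc k) A + iter ?P' (Suc k) (- A) = (\<Sum>B\<in>UNIV. ?P A B * (iter ?P k B + iter ?P' k (- B)))"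
    unfolding e by (simp add: sum.distrib algebra_simps)
  also have "\<dots> \<le> (\<Sum>B\<in>UNIV. ?P A B * 1)"
    by (rule kern_op_mono[OF kern_trans[OF assms]]) (rule Suc.IH)
  also have "\<dots> = 1" using trans_row[OF assms] by simp
  finally show ?case .
qed

lemma fix_ext:
  assumes "row_stochastic WR" "row_stochastic WM" "r > 0"
  shows "fix_prob WR WM r A + fix_prob WM WR (1/r) (- A) \<le> 1"
proof -
  have k': "kern (trans WM WR (1/r))" using kern_trans[OF assms(2,1)] assms(3) by simp
  have "(\<lambda>k. iter (trans WR WM r) k A + iter (trans WM WR (1/r)) k (- A))
     \<longlonglongrightarrow> L (trans WR WM r) A + L (trans WM WR (1/r)) (- A)"
    by (intro tendsto_add iter_lim kern_trans[OF assms] k')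
  moreover have "\<exists>N. \<forall>n\<ge>N. iter (trans WR WM r) n A + iter (trans WM WR (1/r)) n (- A) \<le> 1"
    using fix_ext_iter[OF assms] by blast
  ultimately show ?thesis unfolding fix_prob_L by (rule LIMSEQ_le_const2)
qed

theorem lemma1:
  fixes WR WM :: "'v::finite \<Rightarrow> 'v \<Rightarrow> real" and r :: real
  assumes "card (UNIV :: 'v set) \<ge> 2"
    and "row_stochastic WR" and "row_stochastic WM"
    and "strongly_connected WR" and "strongly_connected WM"
    and "r > 0"
  shows "fixation WR WM r \<le> 1 - fixation WM WR (1 / r)"
proof -
  define h where "h u = fix_prob WR WM r {u}" for u
  define f where "f u = fix_prob WM WR (1/r) {u}" for u
  define n where "n = real (card (UNIV :: 'v set))"
  define H where "H = (\<Sum>u\<in>UNIV. h u)"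
  define F where "F = (\<Sum>u\<in>UNIV. f u)"
  have n2: "n \<ge> 2" unfolding n_def using assms(1) by simp
  have key: "h u \<le> 1 - f v" if "u \<noteq> v" for u v
  proof -
    have "h u \<le> fix_prob WR WM r (- {v})" unfolding h_def
      using that by (intro fix_prob_mono[OF assms(2,3,6)]) auto
    moreover have "fix_prob WR WM r (- {v}) + f v \<le> 1"
      using fix_ext[OF assms(2,3,6), of "- {v}"] unfolding f_def by simp
    ultimately show ?thesis by simp
  qed
  have cd: "real (card (UNIV - {u::'v})) = n - 1" for u
    unfolding n_def using card_pos[where 'v='v] by (simp add: card_Diff_singleton of_nat_diff)
  have A: "(n - 1) * h u \<le> (n - 1) - (F - f u)" for u
  proof -
    have "(n - 1) * h u = (\<Sum>v\<in>UNIV - {u}. h u)" using cd[of u] by simp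
    also have "\<dots> \<le> (\<Sum>v\<in>UNIV - {u}. 1 - f v)" using key by (intro sum_mono) auto
    also have "\<dots> = (n - 1) - (\<Sum>v\<in>UNIV - {u}. f v)" using cd[of u] by (simp add: sum_subtractf)
    also have "(\<Sum>v\<in>UNIV - {u}. f v) = F - f u" unfolding F_def by (simp add: sum_diff1)
    finally show ?thesis .
  qed
  have "(n - 1) * H = (\<Sum>u\<in>UNIV. (n - 1) * h u)" unfolding H_def by (simp add: sum_distrib_left)
  also have "\<dots> \<le> (\<Sum>u\<in>UNIV. (n - 1) - (F - f u))" using A by (intro sum_mono) auto
  also have "\<dots> = n * (n - 1) - n * F + F"
    unfolding F_def n_def by (simp add: sum_subtractf sum.distrib algebra_simps)
  also have "\<dots> = (n - 1) * (n - F)" by (simp add: algebra_simps)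
  finally have "(n - 1) * H \<le> (n - 1) * (n - F)" .
  hence HF: "H \<le> n - F" using n2 by simp
  have "fixation WR WM r = H / n" unfolding fixation_def H_def h_def n_def by simp
  also have "\<dots> \<le> (n - F) / n" using HF n2 by (intro divide_right_mono) auto
  also have "\<dots> = 1 - F / n" using n2 by (simp add: field_simps)
  also have "F / n = fixation WM WR (1 / r)" unfolding fixation_def F_def f_def n_def by simp
  finally show ?thesis .
qed

end
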